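(* Let $\mathbb{C}[T_0,\dots,T_r]$ carry the $\mathbb{Z}$-grading $\deg T_i=w_i\in\mathbb{Z}_{>0}$, let $f_1,\dots,f_s\in\mathbb{C}[T_0,\dots,T_r]$ be homogeneous polynomials, let $n_0,\dots,n_r>0$, $m\ge0$ be integers, $n=n_0+\dots+n_r$, let $l_i=(l_{i1},\dots,l_{in_i})$ be tuples of positive integers, and set $$g_i:=f_i(T_0^{l_0},\dots,T_r^{l_r})\in\mathbb{C}[T_{ij},S_k],\qquad T_i^{l_i}:=T_{i1}^{l_{i1}}\cdots T_{in_i}^{l_{in_i}},$$ where $\mathbb{C}[T_{ij},S_k]$ is the polynomial ring in $T_{ij}$ ($0\le i\le r$, $1\le j\le n_i$) and $S_1,\dots,S_m$. Then the affine variety $V(g_1,\dots,g_s)\subseteq\mathbb{C}^{n+m}$ is connected. *)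

theory Defs
  imports "HOL-Analysis.Analysis" "HOL-Library.Poly_Mapping"
begin

text \<open>Multivariate polynomials over the complex numbers in the variables T_0, T_1, ...
  are represented as finitely supported maps from exponent vectors (finitely supported
  maps nat to nat) to coefficients.\<close>
type_synonym cmpoly = "(nat \<Rightarrow>\<^sub>0 nat) \<Rightarrow>\<^sub>0 complex"

definition mpoly_eval :: "cmpoly \<Rightarrow> (nat \<Rightarrow> complex) \<Rightarrow> complex" where
  "mpoly_eval p x = (\<Sum>a\<in>Poly_Mapping.keys p. Poly_Mapping.lookup p a * (\<Prod>i\<in>Poly_Mapping.keys (a::nat \<Rightarrow>\<^sub>0 nat). x i ^ Poly_Mapping.lookup a i))"

definition mpoly_in_vars :: "nat \<Rightarrow> cmpoly \<Rightarrow> bool" where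
  "mpoly_in_vars r p \<longleftrightarrow> (\<forall>a\<in>Poly_Mapping.keys p. Poly_Mapping.keys a \<subseteq> {0..r})"

definition weighted_homogeneous :: "(nat \<Rightarrow> nat) \<Rightarrow> cmpoly \<Rightarrow> bool" where
  "weighted_homogeneous w p \<longleftrightarrow>
     (\<exists>d. \<forall>a\<in>Poly_Mapping.keys p. (\<Sum>i\<in>Poly_Mapping.keys a. w i * Poly_Mapping.lookup a i) = d)"

text \<open>Points of C^(n+m): coordinates Inl (i,j) for T_ij (i \<le> r, 1 \<le> j \<le> n i) and
  Inr k for S_k (1 \<le> k \<le> m); all other coordinates are fixed to 0.\<close>
definition coord_vars :: "nat \<Rightarrow> (nat \<Rightarrow> nat) \<Rightarrow> nat \<Rightarrow> (nat \<times> nat + nat) set" where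
  "coord_vars r n m = Inl ` {(i,j). i \<le> r \<and> 1 \<le> j \<and> j \<le> n i} \<union> Inr ` {1..m}"

definition subst_eval :: "cmpoly \<Rightarrow> (nat \<Rightarrow> nat) \<Rightarrow> (nat \<Rightarrow> nat \<Rightarrow> nat)
    \<Rightarrow> (nat \<times> nat + nat \<Rightarrow> complex) \<Rightarrow> complex" where
  "subst_eval p n l x = mpoly_eval p (\<lambda>i. \<Prod>j=1..n i. x (Inl (i,j)) ^ l i j)"

definition zero_set :: "nat \<Rightarrow> (nat \<Rightarrow> nat) \<Rightarrow> nat \<Rightarrow> (nat \<Rightarrow> nat \<Rightarrow> nat) \<Rightarrow> nat
    \<Rightarrow> (nat \<Rightarrow> cmpoly) \<Rightarrow> (nat \<times> nat + nat \<Rightarrow> complex) set" where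
  "zero_set r n m l s f =
     {x. (\<forall>v. v \<notin> coord_vars r n m \<longrightarrow> x v = 0) \<and> (\<forall>k\<in>{1..s}. subst_eval (f k) n l x = 0)}"

end

theory Submission
  imports Defs
begin

lemma eval_scale:
  fixes p :: cmpoly
  assumes "mpoly_in_vars r p"
    and "\<forall>a\<in>Poly_Mapping.keys p. (\<Sum>i\<in>Poly_Mapping.keys a. w i * Poly_Mapping.lookup a i) = d"
    and "\<forall>i\<le>r. z i = C ^ (w i) * y i"
  shows "mpoly_eval p z = C ^ d * mpoly_eval p y"
  unfolding mpoly_eval_def sum_distrib_left
proof (rule sum.cong[OF refl])
  fix a assume a: "a \<in> Poly_Mapping.keys p"
  have ks: "Poly_Mapping.keys a \<subseteq> {0..r}" using assms(1) a unfolding mpoly_in_vars_def by blast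
  have "(\<Prod>i\<in>Poly_Mapping.keys a. z i ^ Poly_Mapping.lookup a i)
      = (\<Prod>i\<in>Poly_Mapping.keys a. C ^ (w i * Poly_Mapping.lookup a i) * y i ^ Poly_Mapping.lookup a i)"
    apply (rule prod.cong[OF refl])
    using ks assms(3) by (auto simp: power_mult_distrib power_mult)
  also have "\<dots> = C ^ (\<Sum>i\<in>Poly_Mapping.keys a. w i * Poly_Mapping.lookup a i) * (\<Prod>i\<in>Poly_Mapping.keys a. y i ^ Poly_Mapping.lookup a i)"
    by (simp add: prod.distrib power_sum)
  also have "\<dots> = C ^ d * (\<Prod>i\<in>Poly_Mapping.keys a. y i ^ Poly_Mapping.lookup a i)"
    using assms(2) a by simp
  finally show "Poly_Mapping.lookup p a * (\<Prod>i\<in>Poly_Mapping.keys a. z i ^ Poly_Mapping.lookup a i) =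
         C ^ d * (Poly_Mapping.lookup p a * (\<Prod>i\<in>Poly_Mapping.keys a. y i ^ Poly_Mapping.lookup a i))"
    by simp
qed

lemma prod_powr_scale:
  fixes c :: real and N L W :: nat and e :: "nat \<Rightarrow> nat"
  assumes "c \<ge> 0" "N > 0" "W > 0" "\<forall>j\<in>{1..N}. e j > 0"
  shows "(\<Prod>j=1..N. (c powr (W / (N * e j))) ^ e j) = c ^ W"
proof (cases "c = 0")
  case True
  have "1 \<in> {1..N}" using assms by auto
  have A: "(\<Prod>j=1..N. ((0::real) powr (W / (N * e j))) ^ e j) = 0"
    by (rule prod_zero) (use assms in \<open>auto intro!: bexI[of _ 1]\<close>)
  have B: "(0::real) ^ W = 0" using assms by simp
  show ?thesis by (simp only: True A B)
next
  case False
  hence cp: "c > 0" using assms by auto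
  have "(\<Prod>j=1..N. (c powr (W / (N * e j))) ^ e j) = (\<Prod>j=1..N. c powr (W / N))"
  proof (rule prod.cong[OF refl])
    fix j assume j: "j \<in> {1..N}"
    have "(c powr (W / (N * e j))) ^ e j = (c powr (W / (N * e j))) powr (real (e j))"
      using cp by (simp add: powr_realpow)
    also have "\<dots> = c powr (W / N)" using assms j by (simp add: powr_powr)
    finally show "(c powr (W / (N * e j))) ^ e j = c powr (W / N)" .
  qed
  also have "\<dots> = (c powr (W/N)) ^ N" by simp
  also have "\<dots> = (c powr (W/N)) powr (real N)" using cp by (simp add: powr_realpow)
  also have "\<dots> = c powr W" using assms by (simp add: powr_powr)
  also have "\<dots> = c ^ W" using cp by (simp add: powr_realpow)
  finally show ?thesis .
qed

theorem lemma3p8: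
  fixes r s m :: nat and w n :: "nat \<Rightarrow> nat" and l :: "nat \<Rightarrow> nat \<Rightarrow> nat"
    and f :: "nat \<Rightarrow> cmpoly"
  assumes "\<forall>i\<le>r. w i > 0"
    and "\<forall>k\<in>{1..s}. mpoly_in_vars r (f k) \<and> weighted_homogeneous w (f k)"
    and "\<forall>i\<le>r. n i > 0"
    and "\<forall>i\<le>r. \<forall>j\<in>{1..n i}. l i j > 0"
  shows "connected (zero_set r n m l s f)"
proof -
  let ?Z = "zero_set r n m l s f"
  define \<gamma> where "\<gamma> x c v = (case v of Inl (i,j) \<Rightarrow> complex_of_real (c powr (w i / (n i * l i j))) * x v
        | Inr k \<Rightarrow> complex_of_real c * x v)" for x :: "nat \<times> nat + nat \<Rightarrow> complex" and c :: real and v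
  have cont: "continuous_on {0..1} (\<gamma> x)" if x: "x \<in> ?Z" for x
  proof (rule continuous_on_coordinatewise_then_product)
    fix v
    show "continuous_on {0..1} (\<lambda>c. \<gamma> x c v)"
    proof (cases "v \<in> coord_vars r n m")
      case False
      hence "x v = 0" using x by (simp add: zero_set_def)
      hence "(\<lambda>c. \<gamma> x c v) = (\<lambda>_. 0)"
        by (auto simp: \<gamma>_def split: sum.splits prod.splits)
      then show ?thesis by (metis continuous_on_const)
    next
      case True
      show ?thesis
      proof (cases v)
        case (Inl ij)
        obtain i j where ij: "ij = (i,j)" by force
        have pos: "w i / (n i * l i j) > 0" using True assms Inl ij
          by (auto simp: coord_vars_def)
        have "continuous_on {0..1} (\<lambda>c::real. c powr (w i / (n i * l i j)))"
          by (rule continuous_on_powr') (use pos in \<open>auto intro: continuous_intros\<close>)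
        then show ?thesis unfolding \<gamma>_def using Inl ij
          by (auto intro!: continuous_intros)
      next
        case (Inr k)
        then show ?thesis unfolding \<gamma>_def by (auto intro!: continuous_intros)
      qed
    qed
  qed
  have mem: "\<gamma> x c \<in> ?Z" if x: "x \<in> ?Z" and c: "c \<in> {0..1}" for x c
  proof -
    have out: "\<gamma> x c v = 0" if "v \<notin> coord_vars r n m" for v
      using x that by (auto simp add: zero_set_def \<gamma>_def split: sum.splits prod.splits)
    have "subst_eval (f k) n l (\<gamma> x c) = 0" if k: "k \<in> {1..s}" for k
    proof -
      from assms(2) k obtain d where iv: "mpoly_in_vars r (f k)" and
        d: "\<forall>a\<in>Poly_Mapping.keys (f k). (\<Sum>i\<in>Poly_Mapping.keys a. w i * Poly_Mapping.lookup a i) = d"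
        unfolding weighted_homogeneous_def by blast
      have "\<forall>i\<le>r. (\<Prod>j=1..n i. \<gamma> x c (Inl (i,j)) ^ l i j) =
          complex_of_real c ^ w i * (\<Prod>j=1..n i. x (Inl (i,j)) ^ l i j)"
      proof (intro allI impI)
        fix i assume i: "i \<le> r"
        have "(\<Prod>j=1..n i. \<gamma> x c (Inl (i,j)) ^ l i j) =
            (\<Prod>j=1..n i. complex_of_real ((c powr (w i / (n i * l i j))) ^ l i j) * x (Inl (i,j)) ^ l i j)"
          by (simp add: \<gamma>_def power_mult_distrib)
        also have "\<dots> = complex_of_real (\<Prod>j=1..n i. (c powr (w i / (n i * l i j))) ^ l i j) * (\<Prod>j=1..n i. x (Inl (i,j)) ^ l i j)"
          by (simp add: prod.distrib)
        also have "(\<Prod>j=1..n i. (c powr (w i / (n i * l i j))) ^ l i j) = c ^ w i"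
          using c i assms by (intro prod_powr_scale) auto
        finally show "(\<Prod>j=1..n i. \<gamma> x c (Inl (i,j)) ^ l i j) =
          complex_of_real c ^ w i * (\<Prod>j=1..n i. x (Inl (i,j)) ^ l i j)" by simp
      qed
      hence "subst_eval (f k) n l (\<gamma> x c) = complex_of_real c ^ d * subst_eval (f k) n l x"
        unfolding subst_eval_def by (intro eval_scale[OF iv d]) auto
      also have "subst_eval (f k) n l x = 0" using x k by (simp add: zero_set_def)
      finally show ?thesis by simp
    qed
    then show ?thesis using out by (simp add: zero_set_def)
  qed
  have g0: "\<gamma> x 0 = (\<lambda>_. 0)" for x
    by (rule ext) (simp add: \<gamma>_def split: sum.splits prod.splits)
  have g1: "\<gamma> x 1 = x" for x
    by (rule ext) (simp add: \<gamma>_def split: sum.splits prod.splits)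
  have eq: "?Z = \<Union> ((\<lambda>x. \<gamma> x ` {0..1}) ` ?Z)"
  proof
    show "?Z \<subseteq> \<Union> ((\<lambda>x. \<gamma> x ` {0..1}) ` ?Z)"
    proof
      fix x assume "x \<in> ?Z"
      then show "x \<in> \<Union> ((\<lambda>x. \<gamma> x ` {0..1}) ` ?Z)"
        using g1[of x] by (auto intro!: bexI[of _ x] image_eqI[of _ _ 1])
    qed
  qed (use mem in auto)
  show ?thesis
  proof (cases "?Z = {}")
    case True then show ?thesis by simp
  next
    case False
    have "(\<lambda>_. 0) \<in> \<Inter> ((\<lambda>x. \<gamma> x ` {0..1}) ` ?Z)"
      using g0 by (auto intro!: image_eqI[of _ _ 0])
    hence "\<Inter> ((\<lambda>x. \<gamma> x ` {0..1}) ` ?Z) \<noteq> {}" by blast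
    then have "connected (\<Union> ((\<lambda>x. \<gamma> x ` {0..1}) ` ?Z))"
      by (intro connected_Union) (auto intro!: connected_continuous_image cont)
    then show ?thesis using eq by simp
  qed
qed

end
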